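(* (1) If $f,g\in\mathcal{P}$, then $\gamma_1 f+\gamma_2 g\in\mathcal{P}$ for all $\gamma_1,\gamma_2\ge0$ (so $\mathcal{P}$ is a convex cone in $\mathcal{L}(G)$). (2) The extreme rays of the cone $\mathcal{P}$ are the sets $\{\gamma u_k:\gamma\ge0\}$, $k\in\{1,\dots,n\}$. (3) $\mathcal{P}_+$ is a convex cone and it is the interior of $\mathcal{P}$. (4) If $f,g\in\mathcal{P}$, then $f\ast g\in\mathcal{P}$. (5) $f\in\mathcal{P}$ if and only if there exists $g\in\mathcal{L}(G)$ with $f=g\ast g$.
   Context: Let $G$ be a graph with vertices $v_1,\dots,v_n$, symmetric non-negative weighted adjacency matrix $\mathbf{A}$, degree matrix $\mathbf{D}=\mathrm{diag}(\sum_k\mathbf{A}_{ik})$ (positive), and normalized Laplacian $\mathbf{L}=\mathbf{I}_n-\mathbf{D}^{-1/2}\mathbf{A}\mathbf{D}^{-1/2}$. Signals are vectors in $\mathcal{L}(G)\cong\mathbb{R}^n$ with standard basis $e_1,\dots,e_n$. Fix an orthonormal eigendecomposition $\mathbf{L}=\mathbf{U}\,\mathrm{diag}(\lambda_1,\dots,\lambda_n)\mathbf{U}^\intercal$ with columns $u_1,\dots,u_n$. Fourier transform $\hat{x}=\mathbf{U}^\intercal x$; convolution $x\ast y=\mathbf{C}_x y$ with $\mathbf{C}_x=\mathbf{U}\,\mathrm{diag}(\hat{x})\mathbf{U}^\intercal$. For $f\in\mathcal{L}(G)$ let $(\mathbf{K}_f)_{ij}=(\mathbf{C}_{e_j}f)(v_i)$;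 $f$ is positive semi-definite (positive definite) if $\mathbf{K}_f$ is symmetric and positive semi-definite (strictly positive definite). $\mathcal{P}$ and $\mathcal{P}_+$ denote the sets of positive semi-definite and positive definite functions, respectively. *)

theory Defs
  imports "HOL-Analysis.Analysis"
begin

definition diag_mat :: "real^'n \<Rightarrow> real^'n^'n" where
  "diag_mat v = (\<chi> i j. if i = j then v $ i else 0)"

definition degree_vec :: "real^'n^'n \<Rightarrow> real^'n" where
  "degree_vec A = (\<chi> i. \<Sum>k\<in>UNIV. A $ i $ k)"

definition norm_laplacian :: "real^'n^'n \<Rightarrow> real^'n^'n" where
  "norm_laplacian A =
     mat 1 - diag_mat (\<chi> i. 1 / sqrt (degree_vec A $ i)) ** A
               ** diag_mat (\<chi> i. 1 / sqrt (degree_vec A $ i))"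

definition graph_fourier :: "real^'n^'n \<Rightarrow> real^'n \<Rightarrow> real^'n" where
  "graph_fourier U x = transpose U *v x"

definition conv_mat :: "real^'n^'n \<Rightarrow> real^'n \<Rightarrow> real^'n^'n" where
  "conv_mat U x = U ** diag_mat (graph_fourier U x) ** transpose U"

definition graph_conv :: "real^'n^'n \<Rightarrow> real^'n \<Rightarrow> real^'n \<Rightarrow> real^'n" where
  "graph_conv U x y = conv_mat U x *v y"

definition K_mat :: "real^'n^'n \<Rightarrow> real^'n \<Rightarrow> real^'n^'n" where
  "K_mat U f = (\<chi> i j. (conv_mat U (axis j 1) *v f) $ i)"

definition psd_fun :: "real^'n^'n \<Rightarrow> real^'n \<Rightarrow> bool" where
  "psd_fun U f \<longleftrightarrow> transpose (K_mat U f) = K_mat U f \<and>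
     (\<forall>x. 0 \<le> x \<bullet> (K_mat U f *v x))"

definition pd_fun :: "real^'n^'n \<Rightarrow> real^'n \<Rightarrow> bool" where
  "pd_fun U f \<longleftrightarrow> transpose (K_mat U f) = K_mat U f \<and>
     (\<forall>x. x \<noteq> 0 \<longrightarrow> 0 < x \<bullet> (K_mat U f *v x))"

definition PSD_set :: "real^'n^'n \<Rightarrow> (real^'n) set" where
  "PSD_set U = {f. psd_fun U f}"

definition PD_set :: "real^'n^'n \<Rightarrow> (real^'n) set" where
  "PD_set U = {f. pd_fun U f}"

definition ray :: "'a::real_vector \<Rightarrow> 'a set" where
  "ray x = {\<gamma> *\<^sub>R x | \<gamma>. \<gamma> \<ge> 0}"

definition extreme_ray :: "'a::real_vector set \<Rightarrow> 'a set \<Rightarrow> bool" where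
  "extreme_ray C R \<longleftrightarrow> (\<exists>x\<in>C. x \<noteq> 0 \<and> R = ray x \<and>
     (\<forall>y\<in>C. \<forall>z\<in>C. y + z \<in> R \<longrightarrow> y \<in> R \<and> z \<in> R))"

end

theory Submission
  imports Defs
begin

lemma diag_mult: "diag_mat v *v w = (\<chi> k. v $ k * w $ k)"
proof -
  have "\<And>i j. diag_mat v $ i $ j * w $ j = (if j = i then v $ i * w $ i else 0)"
    by (simp add: diag_mat_def)
  then show ?thesis by (simp add: vec_eq_iff matrix_vector_mult_def)
qed

lemma conv_apply: "conv_mat U a *v b = U *v (\<chi> k. graph_fourier U a $ k * graph_fourier U b $ k)"
  unfolding conv_mat_def
  by (simp add: matrix_vector_mul_assoc[symmetric] diag_mult graph_fourier_def)

lemma K_eq: "K_mat U f = conv_mat U f"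
proof -
  have "conv_mat U (axis j 1) *v f = conv_mat U f *v axis j 1" for j
    by (simp add: conv_apply mult.commute)
  then show ?thesis
    by (simp add: K_mat_def vec_eq_iff matrix_vector_mult_basis column_def)
qed

lemma transpose_diag: "transpose (diag_mat v) = diag_mat v"
  by (simp add: vec_eq_iff diag_mat_def transpose_def)

lemma conv_sym: "transpose (conv_mat U f) = conv_mat U f"
  unfolding conv_mat_def
  by (simp add: matrix_transpose_mul transpose_diag matrix_mul_assoc)

lemma quad: "x \<bullet> (K_mat U f *v x) =
   (\<Sum>k\<in>UNIV. graph_fourier U f $ k * (graph_fourier U x $ k)^2)"
proof -
  have "x \<bullet> (K_mat U f *v x) = x \<bullet> (U *v (\<chi> k. graph_fourier U f $ k * graph_fourier U x $ k))"
    by (simp add: K_eq conv_apply)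
  also have "\<dots> = (x v* U) \<bullet> (\<chi> k. graph_fourier U f $ k * graph_fourier U x $ k)"
    by (simp add: dot_lmul_matrix)
  also have "x v* U = graph_fourier U x"
    using vector_transpose_matrix[of x "transpose U"] by (simp add: graph_fourier_def)
  finally show ?thesis
    by (simp add: inner_vec_def power2_eq_square mult_ac)
qed

context
  fixes U :: "real^'n^'n"
  assumes orth: "orthogonal_matrix U"
begin

abbreviation h where "h f \<equiv> graph_fourier U f"

lemma h_inv: "h (U *v v) = v"
  using orth by (simp add: graph_fourier_def matrix_vector_mul_assoc orthogonal_matrix_def)

lemma inv_h: "U *v h f = f"
proof -
  have "U *v h f = (U ** transpose U) *v f"
    unfolding graph_fourier_def by (rule matrix_vector_mul_assoc)
  then show ?thesis using orth by (simp add: orthogonal_matrix_def)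
qed

lemma axis_sum: "(\<Sum>ka\<in>UNIV. (c::real^'n) $ ka * (axis k 1 $ ka)^2) = c $ k"
proof -
  have "\<And>ka. c $ ka * (axis k (1::real) $ ka)^2 = (if ka = k then c $ k else 0)"
    by (simp add: axis_def)
  then show ?thesis by simp
qed

lemma h_inj: "h f = h g \<Longrightarrow> f = g"
  by (metis inv_h)

lemma h_lin: "h (a *\<^sub>R f + b *\<^sub>R g) = a *\<^sub>R h f + b *\<^sub>R h g"
  by (simp add: graph_fourier_def matrix_vector_right_distrib matrix_vector_mult_scaleR)

lemma h_diff: "h (f - g) = h f - h g"
  by (simp add: graph_fourier_def matrix_vector_mult_diff_distrib)

lemma h_col: "h (column k U) = axis k 1"
  using h_inv[of "axis k 1"] by (simp add: matrix_vector_mult_basis)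

lemma psd_iff: "f \<in> PSD_set U \<longleftrightarrow> (\<forall>k. 0 \<le> h f $ k)"
proof
  assume "f \<in> PSD_set U"
  then have H: "\<forall>x. 0 \<le> x \<bullet> (K_mat U f *v x)" by (simp add: PSD_set_def psd_fun_def)
  show "\<forall>k. 0 \<le> h f $ k"
  proof
    fix k
    have "0 \<le> column k U \<bullet> (K_mat U f *v column k U)" using H by blast
    also have "\<dots> = h f $ k"
      by (simp only: quad h_col axis_sum)
    finally show "0 \<le> h f $ k" .
  qed
next
  assume "\<forall>k. 0 \<le> h f $ k"
  then show "f \<in> PSD_set U"
    by (simp add: PSD_set_def psd_fun_def K_eq[symmetric] conv_sym[of U f, folded K_eq] quad sum_nonneg)
qed

lemma pd_iff: "f \<in> PD_set U \<longleftrightarrow> (\<forall>k. 0 < h f $ k)"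
proof
  assume "f \<in> PD_set U"
  then have H: "\<forall>x. x \<noteq> 0 \<longrightarrow> 0 < x \<bullet> (K_mat U f *v x)" by (simp add: PD_set_def pd_fun_def)
  show "\<forall>k. 0 < h f $ k"
  proof
    fix k
    have "column k U \<noteq> 0" using h_col[of k]
      by (metis axis_eq_0_iff graph_fourier_def matrix_vector_mult_0_right zero_neq_one)
    then have "0 < column k U \<bullet> (K_mat U f *v column k U)" using H by blast
    also have "\<dots> = h f $ k"
      by (simp only: quad h_col axis_sum)
    finally show "0 < h f $ k" .
  qed
next
  assume A: "\<forall>k. 0 < h f $ k"
  have "0 < x \<bullet> (K_mat U f *v x)" if "x \<noteq> 0" for x
  proof -
    have "h x \<noteq> 0" using that inv_h[of x] by (metis graph_fourier_def inv_h matrix_vector_mult_0_right)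
    then obtain j where j: "h x $ j \<noteq> 0" by (auto simp: vec_eq_iff)
    have "0 < h f $ j * (h x $ j)^2" using A j by simp
    also have "\<dots> \<le> (\<Sum>k\<in>UNIV. h f $ k * (h x $ k)^2)"
      by (rule member_le_sum) (use A in \<open>auto intro!: mult_nonneg_nonneg simp: less_imp_le\<close>)
    finally show ?thesis by (simp add: quad)
  qed
  then show "f \<in> PD_set U"
    by (simp add: PD_set_def pd_fun_def conv_sym[of U f, folded K_eq])
qed


lemma psd_cone: "f \<in> PSD_set U \<Longrightarrow> g \<in> PSD_set U \<Longrightarrow> 0 \<le> a \<Longrightarrow> 0 \<le> b
   \<Longrightarrow> a *\<^sub>R f + b *\<^sub>R g \<in> PSD_set U"
  by (simp add: psd_iff h_lin)

lemma pd_cone: "f \<in> PD_set U \<Longrightarrow> g \<in> PD_set U \<Longrightarrow> 0 \<le> a \<Longrightarrow> 0 \<le> b \<Longrightarrow> 0 < a \<or> 0 < b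
   \<Longrightarrow> a *\<^sub>R f + b *\<^sub>R g \<in> PD_set U"
  apply (simp add: pd_iff h_lin)
  by (smt (verit, best) mult_nonneg_nonneg mult_pos_pos)

lemma h_conv: "h (graph_conv U f g) = (\<chi> k. h f $ k * h g $ k)"
  by (simp add: graph_conv_def conv_apply h_inv)

lemma conv_psd: "f \<in> PSD_set U \<Longrightarrow> g \<in> PSD_set U \<Longrightarrow> graph_conv U f g \<in> PSD_set U"
  by (simp add: psd_iff h_conv)

lemma sq_char: "f \<in> PSD_set U \<longleftrightarrow> (\<exists>g. f = graph_conv U g g)"
proof
  assume "f \<in> PSD_set U"
  then have A: "\<forall>k. 0 \<le> h f $ k" by (simp add: psd_iff)
  define g where "g = U *v (\<chi> k. sqrt (h f $ k))"
  have "h (graph_conv U g g) = h f"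
    using A by (simp add: h_conv g_def h_inv vec_eq_iff)
  then show "\<exists>g. f = graph_conv U g g" using h_inj by metis
next
  assume "\<exists>g. f = graph_conv U g g"
  then show "f \<in> PSD_set U" by (auto simp: psd_iff h_conv)
qed

lemma PD_open: "open (PD_set U)"
proof -
  have "PD_set U = (\<Inter>k\<in>UNIV. {f. (\<lambda>f. 0) f < (\<lambda>f. (transpose U *v f) $ k) f})"
    by (auto simp: pd_iff graph_fourier_def)
  moreover have "open {f. (\<lambda>f. 0) f < (\<lambda>f. (transpose U *v f) $ k) f}" for k
    by (rule open_Collect_less) (rule continuous_on_const, rule continuous_on_component, rule matrix_vector_mult_linear_continuous_on)
  ultimately show ?thesis by (simp add: open_INT)
qed

lemma interior_eq: "interior (PSD_set U) = PD_set U"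
proof
  show "PD_set U \<subseteq> interior (PSD_set U)"
    by (rule interior_maximal) (auto simp: PD_open psd_iff pd_iff less_imp_le)
next
  show "interior (PSD_set U) \<subseteq> PD_set U"
  proof
    fix f assume "f \<in> interior (PSD_set U)"
    then obtain e where e: "e > 0" "ball f e \<subseteq> PSD_set U"
      by (meson mem_interior)
    show "f \<in> PD_set U"
    proof (rule ccontr)
      assume "f \<notin> PD_set U"
      then obtain k where k: "h f $ k \<le> 0" by (auto simp: pd_iff not_less)
      define c where "c = column k U"
      have c0: "c \<noteq> 0" using h_col[of k] unfolding c_def
        by (metis axis_eq_0_iff graph_fourier_def matrix_vector_mult_0_right zero_neq_one)
      define d where "d = e / (2 * norm c)"
      have d: "d > 0" using e c0 by (simp add: d_def)
      define g where "g = f - d *\<^sub>R c"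
      have "dist f g = d * norm c" using d by (simp add: g_def dist_norm)
      also have "\<dots> = e / 2" using c0 by (simp add: d_def)
      finally have "g \<in> ball f e" using e by simp
      then have "g \<in> PSD_set U" using e by blast
      then have "0 \<le> h g $ k" by (simp add: psd_iff)
      moreover have "h g $ k = h f $ k - d"
        using h_lin[of d "column k U" 0 0] by (simp add: g_def h_diff c_def h_col)
      ultimately show False using k d by simp
    qed
  qed
qed

lemma ray_scale: "c > 0 \<Longrightarrow> ray (c *\<^sub>R v) = ray v"
proof
  assume c: "c > 0"
  show "ray (c *\<^sub>R v) \<subseteq> ray v"
  proof
    fix y assume "y \<in> ray (c *\<^sub>R v)"
    then obtain g where "y = g *\<^sub>R (c *\<^sub>R v)" "g \<ge> 0" unfolding ray_def by blast
    then show "y \<in> ray v" unfolding ray_def using c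
      by (auto intro!: exI[of _ "g * c"])
  qed
  show "ray v \<subseteq> ray (c *\<^sub>R v)"
  proof
    fix y assume "y \<in> ray v"
    then obtain g where "y = g *\<^sub>R v" "g \<ge> 0" unfolding ray_def by blast
    then show "y \<in> ray (c *\<^sub>R v)" unfolding ray_def using c
      by (auto intro!: exI[of _ "g / c"])
  qed
qed

lemma on_axis: assumes "\<forall>l. l \<noteq> k \<longrightarrow> h y $ l = 0" shows "y = h y $ k *\<^sub>R column k U"
proof -
  have "h y = h y $ k *\<^sub>R axis k 1"
    using assms by (auto simp: vec_eq_iff axis_def)
  then have "h y = h (h y $ k *\<^sub>R column k U)"
    using h_lin[of "h y $ k" "column k U" 0 0] by (simp add: h_col)
  then show ?thesis by (rule h_inj)
qed

lemma extreme_iff: "extreme_ray (PSD_set U) R \<longleftrightarrow> (\<exists>k. R = ray (column k U))"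
proof
  assume "extreme_ray (PSD_set U) R"
  then obtain x where x: "x \<in> PSD_set U" "x \<noteq> 0" "R = ray x"
    and P: "\<forall>y\<in>PSD_set U. \<forall>z\<in>PSD_set U. y + z \<in> R \<longrightarrow> y \<in> R \<and> z \<in> R"
    unfolding extreme_ray_def by blast
  have hx: "\<forall>l. 0 \<le> h x $ l" using x by (simp add: psd_iff)
  have "h x \<noteq> 0" using x(2) inv_h[of x] by (metis graph_fourier_def matrix_vector_mult_0_right)
  then obtain k where "h x $ k \<noteq> 0" by (auto simp: vec_eq_iff)
  with hx[rule_format, of k] have k: "h x $ k > 0" by linarith
  define y where "y = h x $ k *\<^sub>R column k U"
  have hy: "h y = h x $ k *\<^sub>R axis k 1"
    using h_lin[of "h x $ k" "column k U" 0 0] by (simp add: h_col y_def)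
  have "y \<in> PSD_set U" using k by (simp add: psd_iff hy axis_def)
  moreover have "x - y \<in> PSD_set U" using hx by (simp add: psd_iff h_diff hy axis_def)
  moreover have "y + (x - y) \<in> R" unfolding x(3) ray_def by (auto intro!: exI[of _ 1])
  ultimately have "y \<in> ray x" using P x(3) by blast
  then obtain \<gamma> where g: "y = \<gamma> *\<^sub>R x" unfolding ray_def by blast
  then have hyg: "h y = \<gamma> *\<^sub>R h x" using h_lin[of \<gamma> x 0 0] by simp
  have "(h y) $ k = (\<gamma> *\<^sub>R h x) $ k" using hyg by simp
  then have "\<gamma> * h x $ k = h x $ k" by (simp add: hy axis_def)
  then have g1: "\<gamma> = 1" using k by simp
  have "\<forall>l. l \<noteq> k \<longrightarrow> h x $ l = 0"
  proof (intro allI impI)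
    fix l assume "l \<noteq> k"
    have "(h y) $ l = (\<gamma> *\<^sub>R h x) $ l" using hyg by simp
    then show "h x $ l = 0" using \<open>l \<noteq> k\<close> g1 by (simp add: hy axis_def)
  qed
  then have "x = h x $ k *\<^sub>R column k U" by (rule on_axis)
  then have "ray x = ray (h x $ k *\<^sub>R column k U)" by (rule arg_cong)
  also have "\<dots> = ray (column k U)" by (rule ray_scale[OF k])
  finally have "ray x = ray (column k U)" .
  then have "R = ray (column k U)" using x(3) by simp
  then show "\<exists>k. R = ray (column k U)" ..
next
  assume "\<exists>k. R = ray (column k U)"
  then obtain k where R: "R = ray (column k U)" by blast
  have mem: "y \<in> R" if a123: "y \<in> PSD_set U" "z \<in> PSD_set U" "y + z \<in> R" for y z
  proof -
    obtain \<gamma> where "y + z = \<gamma> *\<^sub>R column k U" using a123(3) R unfolding ray_def by blast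
    then have "h y + h z = \<gamma> *\<^sub>R axis k 1" using h_lin[of 1 y 1 z] h_lin[of \<gamma> "column k U" 0 0]
      by (simp add: h_col)
    then have sum: "h y $ l + h z $ l = (if l = k then \<gamma> else 0)" for l
    proof -
      have "(h y + h z) $ l = (\<gamma> *\<^sub>R axis k 1) $ l" using \<open>h y + h z = _\<close> by simp
      then show ?thesis by (simp add: axis_def)
    qed
    have py: "\<forall>l. 0 \<le> h y $ l" "\<forall>l. 0 \<le> h z $ l" using a123 by (auto simp: psd_iff)
    have "\<forall>l. l \<noteq> k \<longrightarrow> h y $ l = 0"
    proof (intro allI impI)
      fix l assume "l \<noteq> k"
      then have "h y $ l + h z $ l = 0" using sum[of l] by simp
      then show "h y $ l = 0" using py[rule_format, of l] by linarith
    qed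
    then have "y = h y $ k *\<^sub>R column k U" by (rule on_axis)
    then show "y \<in> R" using py unfolding R ray_def by blast
  qed
  have "column k U \<in> PSD_set U" by (simp add: psd_iff h_col axis_def)
  moreover have "column k U \<noteq> 0" using h_col[of k]
    by (metis axis_eq_0_iff graph_fourier_def matrix_vector_mult_0_right zero_neq_one)
  moreover have "\<forall>y\<in>PSD_set U. \<forall>z\<in>PSD_set U. y + z \<in> R \<longrightarrow> y \<in> R \<and> z \<in> R"
  proof (intro ballI impI conjI)
    fix y z assume a: "y \<in> PSD_set U" "z \<in> PSD_set U" "y + z \<in> R"
    then show "y \<in> R" by (rule mem)
    from a have "z + y \<in> R" by (simp add: add.commute)
    then show "z \<in> R" using a mem by blast
  qed
  ultimately show "extreme_ray (PSD_set U) R" unfolding extreme_ray_def using R by blast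
qed

end


theorem corollary1:
  fixes A U :: "real^'n^'n" and lam :: "real^'n"
  assumes sym: "transpose A = A"
    and nonneg: "\<forall>i j. 0 \<le> A $ i $ j"
    and deg_pos: "\<forall>i. 0 < degree_vec A $ i"
    and orth: "orthogonal_matrix U"
    and eig: "norm_laplacian A = U ** diag_mat lam ** transpose U"
  shows
    "(\<forall>f\<in>PSD_set U. \<forall>g\<in>PSD_set U. \<forall>\<gamma>1 \<gamma>2. 0 \<le> \<gamma>1 \<longrightarrow> 0 \<le> \<gamma>2 \<longrightarrow>
        \<gamma>1 *\<^sub>R f + \<gamma>2 *\<^sub>R g \<in> PSD_set U)
     \<and> {R. extreme_ray (PSD_set U) R} = {ray (column k U) | k. True}
     \<and> (\<forall>f\<in>PD_set U. \<forall>g\<in>PD_set U. \<forall>\<gamma>1 \<gamma>2. 0 \<le> \<gamma>1 \<longrightarrow> 0 \<le> \<gamma>2 \<longrightarrow>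
          (0 < \<gamma>1 \<or> 0 < \<gamma>2) \<longrightarrow> \<gamma>1 *\<^sub>R f + \<gamma>2 *\<^sub>R g \<in> PD_set U)
     \<and> interior (PSD_set U) = PD_set U
     \<and> (\<forall>f\<in>PSD_set U. \<forall>g\<in>PSD_set U. graph_conv U f g \<in> PSD_set U)
     \<and> (\<forall>f. f \<in> PSD_set U \<longleftrightarrow> (\<exists>g. f = graph_conv U g g))"
proof -
  have e: "{R. extreme_ray (PSD_set U) R} = {ray (column k U) | k. True}"
    using extreme_iff[OF orth] by blast
  show ?thesis
    apply (intro conjI)
    subgoal using psd_cone[OF orth] by blast
    subgoal by (rule e)
    subgoal using pd_cone[OF orth] by blast
    subgoal by (rule interior_eq[OF orth])
    subgoal using conv_psd[OF orth] by blast
    subgoal using sq_char[OF orth] by blast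
    done
qed

end
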